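(* In the semi-discrete wave setting described in the context, assume that the reference state $u$ satisfies the discrete non-degeneracy condition: for all $t>0$ and all $j\in\{1,\dots,N-1\}$, $\frac12u_{(2,j)}(t)-2u_{(1,j)}(t)\neq0$. Let $Z_d=U_0(T)=(u(T),\partial_tu(T))$. Then there exist a neighborhood $\mathcal{V}(0)\subset C([0,T];W_h)$ of $0$ and a neighborhood $\mathcal{V}(Z_d)\subset\mathcal{F}(\mathring\Omega_h)^2$ of $Z_d$ such that for every $Z\in\mathcal{V}(Z_d)$ there exists $\varphi\in\mathcal{V}(0)$ with $U_\varphi(T)=Z$.
   Context: Let $h>0$, integers $M,N\ge2$, grid $\Omega_h=\{(ih,jh):0\le i\le M,0\le j\le N\}$ with nodes indexed $(i,j)$, interior $\mathring\Omega_h=\{1\le i\le M-1,1\le j\le N-1\}$, $\Gamma^1=\{(1,j):1\le j\le N-1\}$; $\mathcal{F}(\mathring\Omega_h)$ is the space of real functions on $\mathring\Omega_h$, extended by $0$ on boundary nodes. For $j=1,\dots,N-1$, $V_j$ equals $(1,0)$ at boundary node $(0,j)$ and $0$ elsewhere, $W_h=\mathrm{span}(V_j)$. Admissible perturbations are $\varphi(t)=\sum_{j=1}^{N-1}h\lambda_j(t)V_j$ with $\lambda_j\in W^{1,\infty}(\mathbb{R}^+)\cap C^1(\mathbb{R}^+)$, $\sup_j\|\lambda_j\|_\infty<1/2$ and $\|\partial_t\lambda_j\|_\infty<1$. $A(\varphi)$ is the operator $[A(\varphi)\phi]_{(i,j)}=h^{-2}(4\phi_{(i,j)}-\phi_{(i+1,j)}-\phi_{(i-1,j)}-\phi_{(i,j+1)}-\phi_{(i,j-1)})$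 for $(i,j)\notin\Gamma^1$ and $[A(\varphi)\phi]_{(1,j)}=h^{-2}\big(2(1+\frac{1}{1+\lambda_j(t)})\phi_{(1,j)}-\frac{2}{2+\lambda_j(t)}\phi_{(2,j)}-\phi_{(1,j+1)}-\phi_{(1,j-1)}\big)$. Given a source $F$ and data $u_0,u_1\in\mathcal{F}(\mathring\Omega_h)$, the perturbed state $u_\varphi$ solves $\partial_t^2u_\varphi+A(\varphi)u_\varphi=F$, $u_\varphi(0)=u_0$, $\partial_tu_\varphi(0)=u_1$, and $U_\varphi=(u_\varphi,\partial_tu_\varphi)$. The reference state is $u=u_{\varphi=0}$ and $U_0=(u,\partial_tu)$. $T>0$ is fixed. *)

theory Defs
  imports "HOL-Analysis.Analysis"
begin

definition interior :: "nat \<Rightarrow> nat \<Rightarrow> (nat \<times> nat) set" where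
  "interior M N = {(i,j). 1 \<le> i \<and> i \<le> M - 1 \<and> 1 \<le> j \<and> j \<le> N - 1}"

text \<open>Membership in F(interior): grid functions vanishing at all non-interior nodes.\<close>
definition in_F :: "nat \<Rightarrow> nat \<Rightarrow> (nat \<times> nat \<Rightarrow> real) \<Rightarrow> bool" where
  "in_F M N w \<longleftrightarrow> (\<forall>p. p \<notin> interior M N \<longrightarrow> w p = 0)"

text \<open>The operator A(phi) at a fixed time, where lam j = lambda_j(t).\<close>
definition Aop :: "real \<Rightarrow> (nat \<Rightarrow> real) \<Rightarrow> (nat \<times> nat \<Rightarrow> real) \<Rightarrow> nat \<times> nat \<Rightarrow> real" where
  "Aop h lam w p = (case p of (i,j) \<Rightarrow>
     if i = 1 then
       (2 * (1 + 1 / (1 + lam j)) * w (1,j) - (2 / (2 + lam j)) * w (2,j)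
         - w (1, j+1) - w (1, j-1)) / h\<^sup>2
     else
       (4 * w (i,j) - w (i+1,j) - w (i-1,j) - w (i,j+1) - w (i,j-1)) / h\<^sup>2)"

definition admissible :: "nat \<Rightarrow> (real \<Rightarrow> nat \<Rightarrow> real) \<Rightarrow> bool" where
  "admissible N lam \<longleftrightarrow>
     (\<exists>dl :: real \<Rightarrow> nat \<Rightarrow> real.
        (\<forall>j\<in>{1..N-1}. \<forall>t\<ge>0. ((\<lambda>s. lam s j) has_real_derivative dl t j) (at t within {0..}))
      \<and> (\<forall>j\<in>{1..N-1}. continuous_on {0..} (\<lambda>t. dl t j))
      \<and> (\<exists>c<1/2. \<forall>j\<in>{1..N-1}. \<forall>t\<ge>0. \<bar>lam t j\<bar> \<le> c)
      \<and> (\<forall>j\<in>{1..N-1}. \<exists>c<1. \<forall>t\<ge>0. \<bar>dl t j\<bar> \<le> c))"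

definition wave_sol ::
  "real \<Rightarrow> nat \<Rightarrow> nat \<Rightarrow> (real \<Rightarrow> nat \<times> nat \<Rightarrow> real) \<Rightarrow> (real \<Rightarrow> nat \<Rightarrow> real)
   \<Rightarrow> (nat \<times> nat \<Rightarrow> real) \<Rightarrow> (nat \<times> nat \<Rightarrow> real)
   \<Rightarrow> (real \<Rightarrow> nat \<times> nat \<Rightarrow> real) \<Rightarrow> (real \<Rightarrow> nat \<times> nat \<Rightarrow> real) \<Rightarrow> bool" where
  "wave_sol h M N F lam u0 u1 u v \<longleftrightarrow>
     (\<forall>t\<ge>0. in_F M N (u t))
   \<and> u 0 = u0 \<and> v 0 = u1
   \<and> (\<forall>t\<ge>0. \<forall>p. ((\<lambda>s. u s p) has_real_derivative v t p) (at t within {0..}))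
   \<and> (\<forall>t\<ge>0. \<forall>p\<in>interior M N.
        ((\<lambda>s. v s p) has_real_derivative (F t p - Aop h (lam t) (u t) p)) (at t within {0..}))"

end

theory Submission
  imports Defs "HOL-Computational_Algebra.Polynomial"
begin


definition pw :: "real \<Rightarrow> real poly \<Rightarrow> real \<Rightarrow> real" where
  "pw T P t = (if t \<in> {T/2..T+1} then poly P (t - T) else 0)"

definition good :: "real \<Rightarrow> nat \<Rightarrow> real poly \<Rightarrow> bool" where
  "good T m P \<longleftrightarrow> [:T/2,1:]^m dvd P \<and> [:-1,1:]^m dvd P"

lemma dvd_pderiv_pow:
  fixes P :: "real poly"
  assumes "[:c,1:]^Suc m dvd P" shows "[:c,1:]^m dvd pderiv P"
proof -
  obtain Q where Q: "P = [:c,1:]^Suc m * Q" using assms by (auto elim: dvdE)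
  have "pderiv P = [:c,1:]^Suc m * pderiv Q + Q * (smult (of_nat (Suc m)) ([:c,1:]^m) * pderiv [:c,1:])"
    unfolding Q pderiv_mult pderiv_power_Suc by simp
  also have "\<dots> = [:c,1:]^m * ([:c,1:] * pderiv Q + smult (of_nat (Suc m)) Q * pderiv [:c,1:])"
    by (simp add: algebra_simps)
  finally show ?thesis by simp
qed

lemma good_pderiv: "good T (Suc m) P \<Longrightarrow> good T m (pderiv P)"
  unfolding good_def using dvd_pderiv_pow by blast

lemma good_mono: "good T m P \<Longrightarrow> n \<le> m \<Longrightarrow> good T n P"
  unfolding good_def by (meson dvd_trans le_imp_power_dvd)

lemma good_add: "good T m P \<Longrightarrow> good T m Q \<Longrightarrow> good T m (P + Q)"
  unfolding good_def by auto
lemma good_diff: "good T m P \<Longrightarrow> good T m Q \<Longrightarrow> good T m (P - Q)"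
  unfolding good_def by auto
lemma good_smult: "good T m P \<Longrightarrow> good T m (smult a P)"
  unfolding good_def by (auto intro: dvd_smult)
lemma good_zero[simp]: "good T m 0"
  unfolding good_def by auto
lemma good_mult: "good T m P \<Longrightarrow> good T m (Q * P)"
  unfolding good_def by auto

lemma good_root:
  assumes "good T (Suc m) P" shows "poly P (-(T/2)) = 0" "poly P 1 = 0"
proof -
  have "[:T/2,1:] dvd P" "[:-1,1:] dvd P" using assms unfolding good_def
    by (meson dvd_trans dvd_power le_add1 plus_1_eq_Suc zero_less_Suc)+
  then show "poly P (-(T/2)) = 0" "poly P 1 = 0" by (simp_all add: poly_eq_0_iff_dvd)
qed

lemma pw_deriv:
  assumes T: "T > 0" and g: "good T 2 P"
  shows "(pw T P has_real_derivative pw T (pderiv P) t) (at t)"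
proof -
  let ?S = "{T/2..T+1}"
  have g1: "good T 1 (pderiv P)" using good_pderiv[of T 1 P] g by (simp add: numeral_2_eq_2)
  have r: "poly P (-(T/2)) = 0" "poly P 1 = 0" using good_root[of T 1 P] g by (simp_all add: numeral_2_eq_2)
  have r': "poly (pderiv P) (-(T/2)) = 0" "poly (pderiv P) 1 = 0" using good_root[of T 0 "pderiv P"] g1 by simp_all
  have cl: "x \<in> closure ?S \<Longrightarrow> x \<in> closure (-?S) \<Longrightarrow> x = T/2 \<or> x = T+1" for x
    using T by (auto simp: closure_complement)
  have dp: "((\<lambda>x. poly P (x - T)) has_real_derivative poly (pderiv P) (x - T)) (at x within A)" for x A
  proof -
    have "((\<lambda>x. x - T) has_real_derivative 1) (at x within A)"
      by (auto intro!: derivative_eq_intros)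
    from DERIV_chain2[where f="poly P" and g="\<lambda>x. x - T", OF poly_DERIV this] show ?thesis by simp
  qed
  have "((\<lambda>x. if x \<in> ?S then poly P (x - T) else 0) has_derivative
      (if t \<in> ?S then (\<lambda>h. poly (pderiv P) (t - T) * h) else (\<lambda>h. 0))) (at t within (?S \<union> -?S))"
    apply (rule has_derivative_If_within_closures[where f'="\<lambda>x h. poly (pderiv P) (x - T) * h" and g'="\<lambda>x h. 0"])
    subgoal using dp unfolding has_field_derivative_def by blast
    subgoal by simp
    subgoal using cl[of t] r by (auto simp: field_simps)
    subgoal using cl[of t] r' by (auto simp: field_simps fun_eq_iff)
    by simp
  moreover have "(*) (0::real) = (\<lambda>h. 0)" by auto
  ultimately have "((\<lambda>x. if x \<in> ?S then poly P (x - T) else 0) has_derivative (*) (pw T (pderiv P) t)) (at t)"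
    unfolding pw_def by (cases "t \<in> ?S") auto
  then show ?thesis unfolding has_field_derivative_def pw_def .
qed




lemma pw_add: "pw T (P + Q) t = pw T P t + pw T Q t" unfolding pw_def by auto
lemma pw_diff: "pw T (P - Q) t = pw T P t - pw T Q t" unfolding pw_def by auto
lemma pw_smult: "pw T (smult a P) t = a * pw T P t" unfolding pw_def by auto
lemma pw_zero[simp]: "pw T 0 t = 0" unfolding pw_def by auto
lemma pw_out: "t < T/2 \<or> t > T+1 \<Longrightarrow> pw T P t = 0" unfolding pw_def by auto
lemma pw_T: "T > 0 \<Longrightarrow> pw T P T = coeff P 0" unfolding pw_def by (auto simp: poly_0_coeff_0)

lemma good_dvd: "good T m P \<Longrightarrow> P dvd Q \<Longrightarrow> good T m Q"
  unfolding good_def using dvd_trans by blast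

lemma coeff_pderiv2: "coeff (pderiv (pderiv P)) k = of_nat (Suc k) * of_nat (Suc (Suc k)) * coeff P (Suc (Suc k))"
  by (simp add: coeff_pderiv mult.assoc)

locale base =
  fixes h T :: real and M N :: nat
  assumes hpos: "h > 0" and Tpos: "T > 0" and M2: "M \<ge> 2" and N2: "N \<ge> 2"
begin

definition KK :: nat where "KK = 2*M + 2"
definition LL :: nat where "LL = 2*M"

definition A0 :: "real poly" where "A0 = [:T/2,1:]^KK * [:-1,1:]^KK"
definition Ap :: "real poly" where "Ap = smult (1 / poly A0 0) A0"
definition qq :: "real poly" where "qq = 1 - (1 - Ap)^(Suc LL)"

lemma A00: "poly A0 0 \<noteq> 0"
  using Tpos unfolding A0_def by simp

lemma Ap0: "poly Ap 0 = 1"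
  using A00 unfolding Ap_def by simp

lemma good_A0: "good T KK A0"
  unfolding good_def A0_def by auto

lemma good_qq: "good T KK qq"
proof -
  have "qq = (1 - (1 - Ap)) * (\<Sum>i<Suc LL. (1 - Ap)^(Suc LL - Suc i) * 1^i)"
    unfolding qq_def using power_diff_sumr2[of 1 "Suc LL" "1 - Ap"] by simp
  then have "Ap dvd qq" by simp
  moreover have "A0 dvd Ap" unfolding Ap_def using A00 by (simp add: dvd_smult_cancel dvd_smult)
  ultimately show ?thesis using good_A0 good_dvd dvd_trans by blast
qed

lemma coeff_qq: "coeff qq 0 = 1" "1 \<le> k \<Longrightarrow> k \<le> LL \<Longrightarrow> coeff qq k = 0"
proof -
  have "poly (1 - Ap) 0 = 0" using Ap0 by simp
  then have "[:0,1:] dvd (1 - Ap)" using poly_eq_0_iff_dvd[of "1 - Ap" 0] by simp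
  then have "[:0,1:]^Suc LL dvd (1 - Ap)^Suc LL" by (rule dvd_power_same)
  then obtain R where R: "(1 - Ap)^Suc LL = [:0,1:]^Suc LL * R" by (auto elim: dvdE)
  have x: "[:0,1:]^n = (monom 1 n :: real poly)" for n
    by (induction n) (auto simp: monom_Suc monom_0 pCons_one[symmetric] simp del: pCons_one)
  have c: "k \<le> LL \<Longrightarrow> coeff ((1 - Ap)^Suc LL) k = 0" for k
    unfolding R x by (simp add: coeff_monom_mult)
  show "coeff qq 0 = 1" unfolding qq_def using c[of 0] by simp
  show "1 \<le> k \<Longrightarrow> k \<le> LL \<Longrightarrow> coeff qq k = 0" unfolding qq_def using c[of k] by simp
qed

end

locale tgt = base +
  fixes d0 d1 :: "nat \<times> nat \<Rightarrow> real"
begin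

fun tab :: "nat \<Rightarrow> nat \<Rightarrow> nat \<Rightarrow> real" where
  "tab 0 i j = (if (i,j) \<in> interior M N then d0 (i,j) else 0)"
| "tab (Suc 0) i j = (if (i,j) \<in> interior M N then d1 (i,j) else 0)"
| "tab (Suc (Suc k)) i j = (if (i,j) \<in> interior M N then
     (tab k (i-1) j - 4 * tab k i j + tab k (i+1) j + tab k i (j+1) + tab k i (j-1))
       / (h^2 * (of_nat (Suc k) * of_nat (Suc (Suc k)))) else 0)"

lemma tab_out: "(i,j) \<notin> interior M N \<Longrightarrow> tab k i j = 0"
  by (induction k i j rule: tab.induct) auto

definition Jp :: "nat \<Rightarrow> real poly" where
  "Jp j = (\<Sum>k\<le>LL. monom (tab k (M-1) j) k)"

definition Y :: "nat \<Rightarrow> real poly" where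
  "Y j = (if 1 \<le> j \<and> j \<le> N - 1 then Jp j * qq else 0)"

primrec Wd :: "nat \<Rightarrow> (nat \<Rightarrow> real poly) \<times> (nat \<Rightarrow> real poly)" where
  "Wd 0 = (Y, \<lambda>j. 0)"
| "Wd (Suc d) = (\<lambda>j. if 1 \<le> j \<and> j \<le> N - 1 then
      smult (h^2) (pderiv (pderiv (fst (Wd d) j))) + smult 4 (fst (Wd d) j) - snd (Wd d) j
        - fst (Wd d) (j+1) - fst (Wd d) (j-1) else 0, fst (Wd d))"

definition W :: "nat \<Rightarrow> nat \<Rightarrow> real poly" where
  "W i j = (if i < M then fst (Wd (M - 1 - i)) j else 0)"

lemma Wd_bnd: "\<not> (1 \<le> j \<and> j \<le> N - 1) \<Longrightarrow> fst (Wd d) j = 0"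
  by (cases d) (auto simp: Y_def)

lemma W_bnd: "\<not> (1 \<le> j \<and> j \<le> N - 1) \<Longrightarrow> W i j = 0"
  unfolding W_def using Wd_bnd by auto

lemma W_rec:
  assumes "1 \<le> i" "i \<le> M - 1" "1 \<le> j" "j \<le> N - 1"
  shows "W (i-1) j = smult (h^2) (pderiv (pderiv (W i j))) + smult 4 (W i j) - W (i+1) j
        - W i (j+1) - W i (j-1)"
proof -
  have e: "M - 1 - (i - 1) = Suc (M - 1 - i)" using assms M2 by auto
  have s: "snd (Wd (M - 1 - i)) j = W (i+1) j"
  proof (cases "i + 1 < M")
    case True
    then have "M - 1 - i = Suc (M - 1 - (i+1))" by auto
    then show ?thesis unfolding W_def using True by simp
  next
    case False
    then have "M - 1 - i = 0" by auto
    then show ?thesis unfolding W_def using False by simp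
  qed
  have w: "W (i-1) j = fst (Wd (Suc (M-1-i))) j" unfolding W_def using assms M2 e by auto
  have wi: "fst (Wd (M-1-i)) j' = W i j'" for j' using assms M2 unfolding W_def by auto
  show ?thesis unfolding w Wd.simps fst_conv using assms by (simp only: wi s) simp
qed

lemma good_Wd: "d \<le> M - 1 \<Longrightarrow> good T (KK - 2*d) (fst (Wd d) j) \<and> good T (KK - 2*d) (snd (Wd d) j)"
proof (induction d arbitrary: j)
  case 0
  then show ?case using good_qq by (auto simp: Y_def intro: good_mult)
next
  case (Suc d)
  have m: "KK - 2*d = Suc (Suc (KK - 2 * Suc d))" using Suc.prems unfolding KK_def by auto
  have IH: "good T (KK - 2*d) (fst (Wd d) j')" "good T (KK - 2*d) (snd (Wd d) j')" for j'
    using Suc by auto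
  have g2: "good T (KK - 2 * Suc d) (pderiv (pderiv (fst (Wd d) j')))" for j'
    using IH(1)[of j'] unfolding m by (intro good_pderiv)
  have g0: "good T (KK - 2 * Suc d) (fst (Wd d) j')" "good T (KK - 2 * Suc d) (snd (Wd d) j')" for j'
    using IH good_mono by (auto intro: good_mono[of _ "KK - 2*d"])
  show ?case using g2 g0
    by (auto intro!: good_add good_diff good_smult)
qed

lemma good_W: "good T 4 (W i j)"
proof (cases "i < M")
  case True
  then have "good T (KK - 2*(M - 1 - i)) (W i j)" using good_Wd[of "M-1-i" j] unfolding W_def by auto
  moreover have "4 \<le> KK - 2*(M - 1 - i)" unfolding KK_def using True by auto
  ultimately show ?thesis using good_mono by blast
next
  case False then show ?thesis unfolding W_def by simp
qed


lemma coeff_Jp: "coeff (Jp j) k = (if k \<le> LL then tab k (M-1) j else 0)"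
  unfolding Jp_def by (simp add: coeff_sum coeff_monom)

lemma coeff_Y: "k \<le> LL \<Longrightarrow> coeff (Y j) k = tab k (M-1) j"
proof (cases "1 \<le> j \<and> j \<le> N - 1")
  case True
  assume k: "k \<le> LL"
  have "coeff (Y j) k = (\<Sum>i\<le>k. coeff (Jp j) i * coeff qq (k - i))"
    using True by (simp add: Y_def coeff_mult)
  also have "{..k} = insert k {..<k}" by auto
  also have "(\<Sum>i\<in>insert k {..<k}. coeff (Jp j) i * coeff qq (k - i)) =
      coeff (Jp j) k * coeff qq 0 + (\<Sum>i<k. coeff (Jp j) i * coeff qq (k - i))"
    by (subst sum.insert) auto
  also have "(\<Sum>i<k. coeff (Jp j) i * coeff qq (k - i)) = 0"
    using k by (intro sum.neutral) (auto simp: coeff_qq)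
  finally show ?thesis using k by (simp add: coeff_qq coeff_Jp)
next
  case False
  then show ?thesis using tab_out[of "M-1" j k] by (auto simp: Y_def interior_def)
qed

lemma coeff_Wd: "d \<le> M - 2 \<Longrightarrow> k \<le> LL - 2*d \<Longrightarrow>
   coeff (fst (Wd d) j) k = tab k (M-1-d) j \<and> coeff (snd (Wd d) j) k = tab k (M-d) j"
proof (induction d arbitrary: j k)
  case 0
  then show ?case using coeff_Y tab_out[of M j k] by (auto simp: interior_def)
next
  case (Suc d)
  define i where "i = M - 1 - d"
  have i2: "2 \<le> i" "i \<le> M - 1" using Suc.prems M2 unfolding i_def by auto
  have e1: "M - 1 - Suc d = i - 1" "M - d = i + 1" "M - Suc d = i" using Suc.prems M2 unfolding i_def by auto
  have dM: "d \<le> M - 2" using Suc.prems by auto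
  have IH1: "coeff (fst (Wd d) j') k' = tab k' i j'" if "k' \<le> LL - 2*d" for j' k'
    using conjunct1[OF Suc.IH[OF dM that, of j']] unfolding i_def .
  have IH2: "coeff (snd (Wd d) j') k' = tab k' (i+1) j'" if "k' \<le> LL - 2*d" for j' k'
    using conjunct2[OF Suc.IH[OF dM that, of j']] unfolding e1(2) .
  have kk: "Suc (Suc k) \<le> LL - 2*d" "k \<le> LL - 2*d" using Suc.prems unfolding LL_def by auto
  have A: "coeff (fst (Wd (Suc d)) j) k = tab k (i-1) j"
  proof (cases "1 \<le> j \<and> j \<le> N - 1")
    case True
    have int: "(i,j) \<in> interior M N" using True i2 by (auto simp: interior_def)
    have c: "h^2 * (of_nat (Suc k) * of_nat (Suc (Suc k))) \<noteq> (0::real)" using hpos by simp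
    have "coeff (fst (Wd (Suc d)) j) k =
        h^2 * (of_nat (Suc k) * of_nat (Suc (Suc k))) * tab (Suc (Suc k)) i j + 4 * tab k i j
        - tab k (i+1) j - tab k i (j+1) - tab k i (j-1)"
      using True kk by (simp add: coeff_pderiv2 IH1 IH2 mult.assoc del: tab.simps)
    also have "\<dots> = tab k (i-1) j"
    proof -
      have "tab (Suc (Suc k)) i j = (tab k (i-1) j - 4 * tab k i j + tab k (i+1) j + tab k i (j+1) + tab k i (j-1))
       / (h^2 * (of_nat (Suc k) * of_nat (Suc (Suc k))))" using int by (simp only: tab.simps if_True)
      then show ?thesis using c by (simp del: tab.simps)
    qed
    finally show ?thesis .
  next
    case False
    then show ?thesis using tab_out[of "i-1" j k] by (auto simp: interior_def)
  qed
  show ?case using A IH1[OF kk(2), of j] e1 by simp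
qed

lemma coeff_W01:
  assumes "1 \<le> i" "i \<le> M - 1"
  shows "coeff (W i j) 0 = tab 0 i j" "coeff (W i j) 1 = tab 1 i j"
proof -
  have d: "M - 1 - i \<le> M - 2" "i < M" "M - 1 - (M - 1 - i) = i" using assms by auto
  have "1 \<le> LL - 2*(M-1-i)" unfolding LL_def using assms by auto
  then show "coeff (W i j) 0 = tab 0 i j" "coeff (W i j) 1 = tab 1 i j"
    using coeff_Wd[OF d(1), of 0 j] coeff_Wd[OF d(1), of 1 j] d unfolding W_def by auto
qed

end




definition cb :: "real \<Rightarrow> nat \<Rightarrow> real poly \<Rightarrow> bool" where
  "cb c D P \<longleftrightarrow> degree P \<le> D \<and> (\<forall>k. \<bar>coeff P k\<bar> \<le> c)"

definition nrm :: "real poly \<Rightarrow> real" where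
  "nrm Q = (\<Sum>i\<le>degree Q. \<bar>coeff Q i\<bar>)"

lemma coeff_le_nrm: "\<bar>coeff Q m\<bar> \<le> nrm Q"
proof (cases "m \<le> degree Q")
  case True then show ?thesis unfolding nrm_def by (intro member_le_sum) auto
next
  case False then show ?thesis unfolding nrm_def by (simp add: coeff_eq_0 sum_nonneg)
qed

lemma cb_add: "cb c1 D P \<Longrightarrow> cb c2 D Q \<Longrightarrow> cb (c1 + c2) D (P + Q)"
  unfolding cb_def by (auto intro: order.trans[OF degree_add_le] order.trans[OF abs_triangle_ineq] add_mono)
lemma cb_diff: "cb c1 D P \<Longrightarrow> cb c2 D Q \<Longrightarrow> cb (c1 + c2) D (P - Q)"
  unfolding cb_def by (auto intro: order.trans[OF degree_diff_le] order.trans[OF abs_triangle_ineq4] add_mono)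
lemma cb_smult: "cb c D P \<Longrightarrow> cb (\<bar>a\<bar> * c) D (smult a P)"
  unfolding cb_def by (auto simp: abs_mult intro: mult_left_mono)
lemma cb_mono: "cb c D P \<Longrightarrow> c \<le> c' \<Longrightarrow> cb c' D P"
  unfolding cb_def by (auto intro: order.trans)
lemma cb_zero: "0 \<le> c \<Longrightarrow> cb c D 0"
  unfolding cb_def by auto
lemma cb_nonneg: "cb c D P \<Longrightarrow> 0 \<le> c"
  unfolding cb_def using abs_ge_zero order.trans by blast

lemma cb_pderiv: "cb c D P \<Longrightarrow> cb (real D * c) D (pderiv P)"
  unfolding cb_def
proof safe
  assume d: "degree P \<le> D" and c: "\<forall>k. \<bar>coeff P k\<bar> \<le> c"
  show "degree (pderiv P) \<le> D" using d degree_pderiv[of P] by auto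
  fix k
  show "\<bar>coeff (pderiv P) k\<bar> \<le> real D * c"
  proof (cases "Suc k \<le> D")
    case True
    have "\<bar>coeff (pderiv P) k\<bar> = real (Suc k) * \<bar>coeff P (Suc k)\<bar>"
      by (simp add: coeff_pderiv abs_mult)
    also have "\<dots> \<le> real D * c" using True c
      by (intro mult_mono) (auto intro: order.trans[OF abs_ge_zero])
    finally show ?thesis .
  next
    case False
    then have "coeff P (Suc k) = 0" using d by (intro coeff_eq_0) auto
    then show ?thesis using c[rule_format, of 0] by (simp add: coeff_pderiv)
  qed
qed

lemma sum_abs_coeff_le:
  fixes P :: "real poly"
  assumes "degree P \<le> D" shows "(\<Sum>i\<le>n. \<bar>coeff P i\<bar>) \<le> (\<Sum>i\<le>D. \<bar>coeff P i\<bar>)"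
proof -
  have "(\<Sum>i\<le>n. \<bar>coeff P i\<bar>) \<le> (\<Sum>i\<le>max n D. \<bar>coeff P i\<bar>)"
    by (rule sum_mono2) auto
  also have "\<dots> = (\<Sum>i\<le>D. \<bar>coeff P i\<bar>)"
    using assms by (intro sum.mono_neutral_right) (auto simp: coeff_eq_0)
  finally show ?thesis .
qed

lemma cb_mult: "cb c D P \<Longrightarrow> cb (real (Suc D) * c * nrm Q) (D + degree Q) (P * Q)"
proof -
  assume a: "cb c D P"
  then have d: "degree P \<le> D" and c: "\<And>k. \<bar>coeff P k\<bar> \<le> c" unfolding cb_def by auto
  have "degree (P * Q) \<le> D + degree Q" using d degree_mult_le[of P Q] by auto
  moreover have "\<bar>coeff (P * Q) n\<bar> \<le> real (Suc D) * c * nrm Q" for n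
  proof -
    have "\<bar>coeff (P * Q) n\<bar> \<le> (\<Sum>i\<le>n. \<bar>coeff P i\<bar> * nrm Q)"
      unfolding coeff_mult by (rule order.trans[OF sum_abs]) (auto simp: abs_mult intro!: sum_mono mult_left_mono coeff_le_nrm)
    also have "\<dots> = (\<Sum>i\<le>n. \<bar>coeff P i\<bar>) * nrm Q" by (simp add: sum_distrib_right)
    also have "\<dots> \<le> (\<Sum>i\<le>D. \<bar>coeff P i\<bar>) * nrm Q"
      using sum_abs_coeff_le[OF d] by (intro mult_right_mono) (auto simp: nrm_def sum_nonneg)
    also have "(\<Sum>i\<le>D. \<bar>coeff P i\<bar>) \<le> real (Suc D) * c"
      using sum_bounded_above[of "{..D}" "\<lambda>i. \<bar>coeff P i\<bar>" c] c by auto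
    then have "(\<Sum>i\<le>D. \<bar>coeff P i\<bar>) * nrm Q \<le> real (Suc D) * c * nrm Q"
      by (intro mult_right_mono) (auto simp: nrm_def sum_nonneg)
    finally show ?thesis .
  qed
  ultimately show ?thesis unfolding cb_def by auto
qed

lemma cb_poly:
  assumes "cb c D P" "\<bar>x\<bar> \<le> R" "1 \<le> R"
  shows "\<bar>poly P x\<bar> \<le> real (Suc D) * c * R^D"
proof -
  have d: "degree P \<le> D" and c: "\<And>k. \<bar>coeff P k\<bar> \<le> c" using assms(1) unfolding cb_def by auto
  have "poly P x = (\<Sum>i\<le>D. coeff P i * x^i)"
    unfolding poly_altdef using d by (intro sum.mono_neutral_left) (auto simp: coeff_eq_0)
  also have "\<bar>\<dots>\<bar> \<le> (\<Sum>i\<le>D. c * R^D)"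
  proof (rule order.trans[OF sum_abs], intro sum_mono)
    fix i assume i: "i \<in> {..D}"
    have "\<bar>x\<bar>^i \<le> R^i" using assms(2) by (intro power_mono) auto
    also have "\<dots> \<le> R^D" using i assms(3) by (intro power_increasing) auto
    finally show "\<bar>coeff P i * x ^ i\<bar> \<le> c * R ^ D"
      by (simp add: abs_mult power_abs) (intro mult_mono c, auto intro: order.trans[OF abs_ge_zero c])
  qed
  finally show ?thesis by simp
qed

context base
begin

definition rho :: real where "rho = 1 + 4 / h^2"
definition Dg :: nat where "Dg = LL + degree qq"
definition C0 :: real where "C0 = real (Suc LL) * rho^LL * nrm qq"
definition Cf :: real where "Cf = real Dg ^ 2 * h^2 + 7"
definition Cst :: "nat \<Rightarrow> real" where "Cst d = Cf^d * C0"
definition Bnd :: real where "Bnd = real (Suc Dg) * (1 + real Dg) * Cst (M - 1) * (1 + T)^Dg"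

lemma rho_ge: "1 \<le> rho" "4 / h^2 \<le> rho" unfolding rho_def using hpos by auto

lemma C0_nonneg: "0 \<le> C0"
  unfolding C0_def nrm_def using rho_ge by (auto intro!: mult_nonneg_nonneg sum_nonneg)

lemma Cf_ge: "1 \<le> Cf" unfolding Cf_def by auto

lemma Cst_mono: "d \<le> d' \<Longrightarrow> Cst d \<le> Cst d'"
  unfolding Cst_def using Cf_ge C0_nonneg by (intro mult_right_mono power_increasing) auto

lemma Cst_nonneg: "0 \<le> Cst d"
  unfolding Cst_def using Cf_ge C0_nonneg by auto

lemma Bnd_nonneg: "0 \<le> Bnd"
  unfolding Bnd_def using Cst_nonneg Tpos by auto

end

context tgt
begin

definition mu :: real where "mu = (\<Sum>p\<in>interior M N. \<bar>d0 p\<bar> + \<bar>d1 p\<bar>)"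

lemma fin_int: "finite (interior M N)"
proof -
  have "interior M N \<subseteq> {0..M} \<times> {0..N}" unfolding interior_def by auto
  then show ?thesis using finite_subset by blast
qed

lemma mu_nonneg: "0 \<le> mu" unfolding mu_def by (auto intro: sum_nonneg)

lemma d_le_mu: assumes "p \<in> interior M N" shows "\<bar>d0 p\<bar> \<le> mu" "\<bar>d1 p\<bar> \<le> mu"
proof -
  have "\<bar>d0 p\<bar> + \<bar>d1 p\<bar> \<le> mu" unfolding mu_def
    using member_le_sum[of p "interior M N" "\<lambda>p. \<bar>d0 p\<bar> + \<bar>d1 p\<bar>"] assms fin_int by auto
  then show "\<bar>d0 p\<bar> \<le> mu" "\<bar>d1 p\<bar> \<le> mu" by auto
qed

lemma tab_bound: "\<bar>tab k i j\<bar> \<le> rho^k * mu"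
proof (induction k i j rule: tab.induct)
  case (1 i j) then show ?case using d_le_mu mu_nonneg by auto
next
  case (2 i j) then show ?case using d_le_mu[of "(i,j)"] mu_nonneg rho_ge
    by (auto intro: order.trans[of _ mu] mult_right_mono[of 1 rho mu, simplified])
next
  case (3 k i j)
  show ?case
  proof (cases "(i,j) \<in> interior M N")
    case False then show ?thesis using mu_nonneg rho_ge by simp
  next
    case True
    let ?c = "h^2 * (of_nat (Suc k) * of_nat (Suc (Suc k)))"
    have "(2::real) \<le> of_nat (Suc k) * of_nat (Suc (Suc k))"
    proof -
      have "(1::real) \<le> of_nat (Suc k)" "(2::real) \<le> of_nat (Suc (Suc k))" by auto
      then show ?thesis using mult_mono[of "1::real" "of_nat (Suc k)" 2 "of_nat (Suc (Suc k))"] by simp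
    qed
    then have c2: "2 * h^2 \<le> ?c" using hpos by (simp add: mult.commute mult_left_mono)
    have cpos: "0 < ?c" using hpos by auto
    let ?X = "tab k (i-1) j - 4 * tab k i j + tab k (i+1) j + tab k i (j+1) + tab k i (j-1)"
    have X: "\<bar>?X\<bar> \<le> 8 * (rho^k * mu)"
      using "3.IH"[OF True] unfolding abs_le_iff by linarith
    have "\<bar>tab (Suc (Suc k)) i j\<bar> = \<bar>?X\<bar> / ?c" using True cpos by simp
    also have "\<dots> \<le> 8 * (rho^k * mu) / (2 * h^2)"
      using X c2 hpos mu_nonneg rho_ge by (intro frac_le) auto
    also have "\<dots> = (4 / h^2) * (rho^k * mu)" by simp
    also have "\<dots> \<le> rho * (rho^k * mu)"
      using rho_ge mu_nonneg by (intro mult_right_mono) auto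
    also have "\<dots> \<le> rho * (rho * (rho^k * mu))"
      using rho_ge mu_nonneg by (intro mult_left_mono mult_right_mono[of 1 rho, simplified]) auto
    finally show ?thesis by (simp add: mult_ac)
  qed
qed


lemma cb_Jp: "cb (rho^LL * mu) LL (Jp j)"
  unfolding cb_def
proof safe
  show "degree (Jp j) \<le> LL" by (rule degree_le) (auto simp: coeff_Jp)
  fix k
  show "\<bar>coeff (Jp j) k\<bar> \<le> rho ^ LL * mu"
  proof (cases "k \<le> LL")
    case True
    have "rho^k \<le> rho^LL" using True rho_ge by (intro power_increasing) auto
    then show ?thesis using tab_bound[of k "M-1" j] True mu_nonneg
      by (auto simp: coeff_Jp intro: order.trans mult_right_mono)
  next
    case False then show ?thesis using mu_nonneg rho_ge by (simp add: coeff_Jp)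
  qed
qed

lemma cb_Y: "cb (C0 * mu) Dg (Y j)"
proof (cases "1 \<le> j \<and> j \<le> N - 1")
  case True
  have "cb (real (Suc LL) * (rho ^ LL * mu) * nrm qq) (LL + degree qq) (Jp j * qq)"
    by (rule cb_mult[OF cb_Jp])
  then show ?thesis using True unfolding Y_def C0_def Dg_def by (simp add: mult_ac)
next
  case False then show ?thesis unfolding Y_def using C0_nonneg mu_nonneg by (auto intro: cb_zero)
qed

lemma cb_Wd: "cb (Cst d * mu) Dg (fst (Wd d) j) \<and> cb (Cst d * mu) Dg (snd (Wd d) j)"
proof (induction d arbitrary: j)
  case 0
  then show ?case using cb_Y C0_nonneg mu_nonneg by (auto simp: Cst_def intro: cb_zero)
next
  case (Suc d)
  let ?c = "Cst d * mu"
  have c0: "0 \<le> ?c" using Cst_nonneg mu_nonneg by auto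
  have e: "Cst (Suc d) * mu = (real Dg ^ 2 * h^2 + 7) * ?c" unfolding Cst_def Cf_def by (simp add: mult_ac)
  have le: "?c \<le> Cst (Suc d) * mu" using Cst_mono[of d "Suc d"] mu_nonneg by (auto intro: mult_right_mono)
  have f: "cb ?c Dg (fst (Wd d) j')" "cb ?c Dg (snd (Wd d) j')" for j' using Suc by auto
  have "cb (\<bar>h^2\<bar> * (real Dg * (real Dg * ?c)) + \<bar>4\<bar> * ?c + ?c + ?c + ?c) Dg
     (smult (h^2) (pderiv (pderiv (fst (Wd d) j))) + smult 4 (fst (Wd d) j) - snd (Wd d) j
        - fst (Wd d) (j+1) - fst (Wd d) (j-1))"
    by (intro cb_diff cb_add cb_smult cb_pderiv f)
  moreover have "\<bar>h^2\<bar> * (real Dg * (real Dg * ?c)) + \<bar>4\<bar> * ?c + ?c + ?c + ?c = Cst (Suc d) * mu"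
    unfolding e by (simp add: algebra_simps power2_eq_square)
  ultimately have A: "cb (Cst (Suc d) * mu) Dg (fst (Wd (Suc d)) j)"
    using c0 le by (auto intro: cb_zero order.trans)
  show ?case using A f(1)[of j] le by (auto intro: cb_mono)
qed

lemma cb_W: "cb (Cst (M-1) * mu) Dg (W i j)"
proof (cases "i < M")
  case True
  then have "cb (Cst (M-1-i) * mu) Dg (W i j)" using cb_Wd unfolding W_def by auto
  moreover have "Cst (M-1-i) * mu \<le> Cst (M-1) * mu"
    using Cst_mono[of "M-1-i" "M-1"] mu_nonneg by (intro mult_right_mono) auto
  ultimately show ?thesis by (rule cb_mono)
next
  case False then show ?thesis unfolding W_def using Cst_nonneg mu_nonneg by (auto intro: cb_zero)
qed

lemma pw_bound_cb:
  assumes "cb c Dg P"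
  shows "\<bar>pw T P t\<bar> \<le> real (Suc Dg) * c * (1 + T)^Dg"
proof (cases "t \<in> {T/2..T+1}")
  case True
  then have "\<bar>t - T\<bar> \<le> 1 + T" using Tpos by auto
  then show ?thesis using True cb_poly[OF assms, of "t - T" "1 + T"] Tpos unfolding pw_def by auto
next
  case False then show ?thesis using cb_nonneg[OF assms] Tpos unfolding pw_def by auto
qed

lemma W_bounds: "\<bar>pw T (W i j) t\<bar> \<le> Bnd * mu" "\<bar>pw T (pderiv (W i j)) t\<bar> \<le> Bnd * mu"
proof -
  have c: "0 \<le> Cst (M-1) * mu" using Cst_nonneg mu_nonneg by auto
  have p: "0 \<le> real (Suc Dg) * (1 + T)^Dg" using Tpos by auto
  have "\<bar>pw T (W i j) t\<bar> \<le> real (Suc Dg) * (Cst (M-1) * mu) * (1 + T)^Dg"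
    by (rule pw_bound_cb[OF cb_W])
  also have "\<dots> \<le> real (Suc Dg) * ((1 + real Dg) * (Cst (M-1) * mu)) * (1 + T)^Dg"
    using c p Tpos by (intro mult_right_mono mult_left_mono) (auto simp: algebra_simps)
  finally show "\<bar>pw T (W i j) t\<bar> \<le> Bnd * mu" unfolding Bnd_def by (simp add: mult_ac)
  have "\<bar>pw T (pderiv (W i j)) t\<bar> \<le> real (Suc Dg) * (real Dg * (Cst (M-1) * mu)) * (1 + T)^Dg"
    by (rule pw_bound_cb[OF cb_pderiv[OF cb_W]])
  also have "\<dots> \<le> real (Suc Dg) * ((1 + real Dg) * (Cst (M-1) * mu)) * (1 + T)^Dg"
    using c p Tpos by (intro mult_right_mono mult_left_mono) auto
  finally show "\<bar>pw T (pderiv (W i j)) t\<bar> \<le> Bnd * mu" unfolding Bnd_def by (simp add: mult_ac)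
qed

end




definition Qf :: "real \<Rightarrow> real \<Rightarrow> real \<Rightarrow> real" where
  "Qf B R E = B^4 - 8*R*E*B^2"
definition Qd :: "real \<Rightarrow> real \<Rightarrow> real \<Rightarrow> real \<Rightarrow> real \<Rightarrow> real \<Rightarrow> real" where
  "Qd B R E B' R' E' = 4*B^3*B' - 8*((R'*E + R*E')*B^2 + R*E*(2*B*B'))"
definition lamf :: "real \<Rightarrow> real \<Rightarrow> real \<Rightarrow> real" where
  "lamf B R E = -4*E*B / (B^2 + sqrt (Qf B R E))"
definition dlamf :: "real \<Rightarrow> real \<Rightarrow> real \<Rightarrow> real \<Rightarrow> real \<Rightarrow> real \<Rightarrow> real" where
  "dlamf B R E B' R' E' = ((-4*(E'*B + E*B')) * (B^2 + sqrt (Qf B R E))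
      - (-4*E*B) * (2*B*B' + inverse (sqrt (Qf B R E)) / 2 * Qd B R E B' R' E'))
      / ((B^2 + sqrt (Qf B R E)) * (B^2 + sqrt (Qf B R E)))"

lemma lamf_deriv:
  assumes b: "(b has_real_derivative b') F" and r: "(r has_real_derivative r') F"
    and e: "(e has_real_derivative e') F" and F: "F = at t within X"
    and Q: "Qf (b t) (r t) (e t) > 0"
  shows "((\<lambda>t. lamf (b t) (r t) (e t)) has_real_derivative dlamf (b t) (r t) (e t) b' r' e') F"
proof -
  have q: "((\<lambda>t. Qf (b t) (r t) (e t)) has_real_derivative Qd (b t) (r t) (e t) b' r' e') F"
    unfolding Qf_def Qd_def F using b r e unfolding F
    by (auto intro!: derivative_eq_intros simp: algebra_simps power2_eq_square power3_eq_cube)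
  have s: "((\<lambda>t. sqrt (Qf (b t) (r t) (e t))) has_real_derivative
      inverse (sqrt (Qf (b t) (r t) (e t))) / 2 * Qd (b t) (r t) (e t) b' r' e') F"
    using DERIV_chain2[OF DERIV_real_sqrt[OF Q] q[unfolded F]] unfolding F .
  have den: "((\<lambda>t. (b t)^2 + sqrt (Qf (b t) (r t) (e t))) has_real_derivative
      2*b t*b' + inverse (sqrt (Qf (b t) (r t) (e t))) / 2 * Qd (b t) (r t) (e t) b' r' e') F"
  proof -
    have pb: "((\<lambda>t. (b t)^2) has_real_derivative 2*b t*b') F"
      using b unfolding F by (auto intro!: derivative_eq_intros)
    show ?thesis using DERIV_add[OF pb[unfolded F] s[unfolded F]] unfolding F .
  qed
  have num: "((\<lambda>t. -4 * e t * b t) has_real_derivative -4*(e'*b t + e t*b')) F"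
    using b e unfolding F by (auto intro!: derivative_eq_intros simp: algebra_simps)
  have nz: "(b t)^2 + sqrt (Qf (b t) (r t) (e t)) \<noteq> 0"
    using Q real_sqrt_gt_zero[OF Q] by (smt (verit) zero_le_power2)
  show ?thesis
    using DERIV_divide[OF num[unfolded F] den[unfolded F] nz] unfolding F lamf_def dlamf_def .
qed

lemma lamf_quad:
  assumes Q: "Qf B R E \<ge> 0" and B: "B \<noteq> 0"
  shows "R * (lamf B R E)^2 + B * lamf B R E + 2*E = 0"
proof -
  define S where "S = sqrt (Qf B R E)"
  define D where "D = B^2 + S"
  have S0: "S \<ge> 0" "S^2 = B^4 - 8*R*E*B^2" using Q unfolding S_def Qf_def by auto
  have Dp: "D > 0" unfolding D_def using S0 B by (smt (verit) zero_less_power2)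
  define l where "l = lamf B R E"
  have ld: "l * D = -4*E*B" unfolding l_def lamf_def D_def S_def[symmetric] using Dp unfolding D_def by simp
  have dd: "D * (D - 2*B^2) = -8*R*E*B^2" unfolding D_def using S0(2)
    by (simp add: algebra_simps power2_eq_square power4_eq_xxxx)
  have "(R * l^2 + B * l + 2*E) * D^2 = R * (l*D)^2 + B * (l*D) * D + 2*E*D^2"
    by (simp add: algebra_simps power2_eq_square)
  also have "\<dots> = 2*E*(8*R*E*B^2 + D*(D - 2*B^2))" unfolding ld
    by (simp add: algebra_simps power2_eq_square)
  also have "\<dots> = 0" unfolding dd by simp
  finally have "(R * l^2 + B * l + 2*E) * D^2 = 0" .
  then show ?thesis using Dp unfolding l_def by simp
qed

lemma lamf_abs:
  assumes Q: "Qf B R E \<ge> 0" and B: "B \<noteq> 0"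
  shows "\<bar>lamf B R E\<bar> \<le> 4 * \<bar>E\<bar> / \<bar>B\<bar>"
proof -
  have S0: "sqrt (Qf B R E) \<ge> 0" using Q by auto
  have "\<bar>lamf B R E\<bar> = 4*\<bar>E\<bar>*\<bar>B\<bar> / (B^2 + sqrt (Qf B R E))"
    unfolding lamf_def using S0 by (simp add: abs_mult)
  also have "\<dots> \<le> 4*\<bar>E\<bar>*\<bar>B\<bar> / B^2"
  proof -
    have b2: "0 < B^2" using B by auto
    then have d: "0 < B^2 + sqrt (Qf B R E)" using S0 by linarith
    have "0 < (B^2 + sqrt (Qf B R E)) * B^2" by (rule mult_pos_pos[OF d b2])
    then show ?thesis using d S0 by (intro divide_left_mono) auto
  qed
  also have "\<dots> = 4 * \<bar>E\<bar> / \<bar>B\<bar>" using B by (simp add: power2_eq_square field_simps)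
  finally show ?thesis .
qed

lemma row1_identity:
  fixes U1 U2 E l :: real
  assumes q: "(2*U1 - U2 + E) * l^2 + (4*U1 - U2 + 3*E) * l + 2*E = 0" and l: "\<bar>l\<bar> < 1/2"
  shows "2*U1/(1+l) - 2*U2/(2+l) = 2*U1 - U2 + E"
proof -
  have a: "1 + l \<noteq> 0" "2 + l \<noteq> 0" using l by auto
  have e: "2*U1*(2+l) - 2*U2*(1+l) = (2*U1 - U2 + E)*((1+l)*(2+l))"
    using q by (simp add: algebra_simps power2_eq_square)
  have "2*U1/(1+l) - 2*U2/(2+l) = (2*U1*(2+l) - 2*U2*(1+l))/((1+l)*(2+l))"
    using a by (simp add: field_simps)
  also have "\<dots> = 2*U1 - U2 + E" unfolding e using a by simp
  finally show ?thesis .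
qed

lemma unif_pos:
  fixes f :: "real \<times> 'a::euclidean_space \<Rightarrow> real"
  assumes S: "compact S" and rho: "\<rho> > 0" and f: "continuous_on (S \<times> cball 0 \<rho>) f"
    and f0: "\<forall>t\<in>S. f (t,0) > 0"
  shows "\<exists>r>0. r \<le> \<rho> \<and> (\<forall>t\<in>S. \<forall>x. norm x \<le> r \<longrightarrow> f (t,x) > 0)"
proof -
  define K where "K = S \<times> cball (0::'a) \<rho>"
  have K: "compact K" unfolding K_def using S by (intro compact_Times) auto
  define Z where "Z = K \<inter> f -` {..0}"
  have Zc: "closed Z" unfolding Z_def
    using continuous_closed_preimage[OF f[folded K_def] compact_imp_closed[OF K], of "{..0}"] by auto
  have "Z \<inter> K = Z" unfolding Z_def by auto
  then have Zk: "compact Z" using closed_Int_compact[OF Zc K] by simp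
  show ?thesis
  proof (cases "Z = {}")
    case True
    show ?thesis
    proof (intro exI[of _ \<rho>] conjI rho order.refl ballI allI impI)
      fix t and x :: 'a assume "t \<in> S" "norm x \<le> \<rho>"
      then have "(t,x) \<in> K" unfolding K_def by auto
      then show "f (t,x) > 0" using True unfolding Z_def by force
    qed
  next
    case False
    have cn: "continuous_on Z (\<lambda>p. norm (snd p))" by (intro continuous_intros)
    obtain p0 where p0: "p0 \<in> Z" "\<forall>y\<in>Z. norm (snd p0) \<le> norm (snd y)"
      using continuous_attains_inf[OF Zk False cn] by blast
    have "snd p0 \<noteq> 0"
    proof
      assume "snd p0 = 0"
      then have "f (fst p0, 0) \<le> 0" "fst p0 \<in> S" using p0(1) unfolding Z_def K_def
        by (metis IntD2 atMost_iff prod.collapse vimage_eq, auto simp: K_def)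
      then show False using f0 by force
    qed
    then have m: "norm (snd p0) > 0" by auto
    define r where "r = min \<rho> (norm (snd p0) / 2)"
    show ?thesis
    proof (intro exI[of _ r] conjI ballI allI impI)
      show "r > 0" "r \<le> \<rho>" unfolding r_def using m rho by auto
      fix t and x :: 'a assume t: "t \<in> S" and x: "norm x \<le> r"
      show "f (t,x) > 0"
      proof (rule ccontr)
        assume "\<not> f (t,x) > 0"
        then have "(t,x) \<in> Z" using t x unfolding Z_def K_def r_def by auto
        then have "norm (snd p0) \<le> norm x" using p0(2) by force
        then show False using x m unfolding r_def by auto
      qed
    qed
  qed
qed




lemma lamf_cont:
  assumes "continuous_on K b" "continuous_on K r" "continuous_on K e"
    and Q: "\<forall>p\<in>K. Qf (b p) (r p) (e p) > 0"
  shows "continuous_on K (\<lambda>p. lamf (b p) (r p) (e p))"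
proof -
  have d: "\<forall>p\<in>K. (b p)^2 + sqrt (Qf (b p) (r p) (e p)) \<noteq> 0"
    using Q by (smt (verit) real_sqrt_gt_zero zero_le_power2)
  have cQ: "continuous_on K (\<lambda>p. Qf (b p) (r p) (e p))"
    unfolding Qf_def by (intro continuous_intros assms)
  have cS: "continuous_on K (\<lambda>p. sqrt (Qf (b p) (r p) (e p)))"
    by (intro continuous_intros cQ)
  have cD: "continuous_on K (\<lambda>p. (b p)^2 + sqrt (Qf (b p) (r p) (e p)))"
    by (intro continuous_intros cS assms)
  have cN: "continuous_on K (\<lambda>p. -4 * e p * b p)"
    by (intro continuous_intros assms)
  show ?thesis unfolding lamf_def
    using continuous_on_divide[OF cN cD] d by blast
qed

lemma dlamf_cont:
  assumes "continuous_on K b" "continuous_on K r" "continuous_on K e"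
    "continuous_on K b'" "continuous_on K r'" "continuous_on K e'"
    and Q: "\<forall>p\<in>K. Qf (b p) (r p) (e p) > 0"
  shows "continuous_on K (\<lambda>p. dlamf (b p) (r p) (e p) (b' p) (r' p) (e' p))"
proof -
  have d: "\<forall>p\<in>K. (b p)^2 + sqrt (Qf (b p) (r p) (e p)) \<noteq> 0"
    using Q by (smt (verit) real_sqrt_gt_zero zero_le_power2)
  have s: "\<forall>p\<in>K. sqrt (Qf (b p) (r p) (e p)) \<noteq> 0"
    using Q by auto
  have cQ: "continuous_on K (\<lambda>p. Qf (b p) (r p) (e p))"
    unfolding Qf_def by (intro continuous_intros assms)
  have cQd: "continuous_on K (\<lambda>p. Qd (b p) (r p) (e p) (b' p) (r' p) (e' p))"
    unfolding Qd_def by (intro continuous_intros assms)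
  have cS: "continuous_on K (\<lambda>p. sqrt (Qf (b p) (r p) (e p)))"
    by (intro continuous_intros cQ)
  have cI: "continuous_on K (\<lambda>p. inverse (sqrt (Qf (b p) (r p) (e p))))"
    using s by (intro continuous_on_inverse cS) auto
  have cD: "continuous_on K (\<lambda>p. (b p)^2 + sqrt (Qf (b p) (r p) (e p)))"
    by (intro continuous_intros cS assms)
  have cDD: "continuous_on K (\<lambda>p. ((b p)^2 + sqrt (Qf (b p) (r p) (e p))) * ((b p)^2 + sqrt (Qf (b p) (r p) (e p))))"
    by (intro continuous_intros cD)
  have cN: "continuous_on K (\<lambda>p. (-4*(e' p*b p + e p*b' p)) * ((b p)^2 + sqrt (Qf (b p) (r p) (e p)))
      - (-4*e p*b p) * (2*b p*b' p + inverse (sqrt (Qf (b p) (r p) (e p))) / 2 * Qd (b p) (r p) (e p) (b' p) (r' p) (e' p)))"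
    by (intro continuous_intros assms cS cI cQd cD cQ) (use s in auto)
  have "\<forall>p\<in>K. ((b p)^2 + sqrt (Qf (b p) (r p) (e p))) * ((b p)^2 + sqrt (Qf (b p) (r p) (e p))) \<noteq> 0"
    using d by simp
  then show ?thesis unfolding dlamf_def
    using continuous_on_divide[OF cN cDD] by blast
qed

lemma lamf_zero: "lamf B R 0 = 0" unfolding lamf_def by simp
lemma dlamf_zero: "dlamf B R 0 B' R' 0 = 0" unfolding dlamf_def by simp

lemma cont_fst: "continuous_on S g \<Longrightarrow> continuous_on (S \<times> C) (\<lambda>p. g (fst p))"
  by (rule continuous_on_compose2[of S g "S \<times> C" fst]) (auto intro: continuous_intros)

lemma finite_min_choice:
  assumes "finite A" "A \<noteq> {}" and ex: "\<forall>j\<in>A. \<exists>r>0. P j r"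
    and mono: "\<And>j r r'. P j r \<Longrightarrow> 0 < r' \<Longrightarrow> r' \<le> r \<Longrightarrow> P j r'"
  shows "\<exists>r>(0::real). \<forall>j\<in>A. P j r"
proof -
  obtain rr where rr: "\<forall>j\<in>A. rr j > 0 \<and> P j (rr j)" using ex by metis
  define r where "r = Min (rr ` A)"
  have "r \<in> rr ` A" unfolding r_def using assms by auto
  then have rp: "r > 0" using rr by auto
  have "r \<le> rr j" if "j \<in> A" for j unfolding r_def using assms that by auto
  then show ?thesis using rp rr mono by blast
qed

type_synonym r6 = "real \<times> real \<times> real \<times> real \<times> real \<times> real"

definition pj1 :: "r6 \<Rightarrow> real" where "pj1 x = fst x"
definition pj2 :: "r6 \<Rightarrow> real" where "pj2 x = fst (snd x)"
definition pj3 :: "r6 \<Rightarrow> real" where "pj3 x = fst (snd (snd x))"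
definition pj4 :: "r6 \<Rightarrow> real" where "pj4 x = fst (snd (snd (snd x)))"
definition pj5 :: "r6 \<Rightarrow> real" where "pj5 x = fst (snd (snd (snd (snd x))))"
definition pj6 :: "r6 \<Rightarrow> real" where "pj6 x = snd (snd (snd (snd (snd x))))"

lemma pj_zero[simp]: "pj1 0 = 0" "pj2 0 = 0" "pj3 0 = 0" "pj4 0 = 0" "pj5 0 = 0" "pj6 0 = 0"
  unfolding pj1_def pj2_def pj3_def pj4_def pj5_def pj6_def by simp_all

lemma pj_tuple[simp]: "pj1 (a,b,c,d,e,f) = a" "pj2 (a,b,c,d,e,f) = b" "pj3 (a,b,c,d,e,f) = c"
  "pj4 (a,b,c,d,e,f) = d" "pj5 (a,b,c,d,e,f) = e" "pj6 (a,b,c,d,e,f) = f"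
  unfolding pj1_def pj2_def pj3_def pj4_def pj5_def pj6_def by simp_all

lemma norm6: "norm ((a,b,c,d,e,f)::r6) \<le> \<bar>a\<bar> + \<bar>b\<bar> + \<bar>c\<bar> + \<bar>d\<bar> + \<bar>e\<bar> + \<bar>f\<bar>"
proof -
  have "norm ((a,b,c,d,e,f)::r6) \<le> norm a + norm (b,c,d,e,f)" by (rule norm_Pair_le)
  also have "norm (b,c,d,e,f) \<le> norm b + norm (c,d,e,f)" by (rule norm_Pair_le)
  also have "norm (c,d,e,f) \<le> norm c + norm (d,e,f)" by (rule norm_Pair_le)
  also have "norm (d,e,f) \<le> norm d + norm (e,f)" by (rule norm_Pair_le)
  also have "norm (e,f) \<le> norm e + norm f" by (rule norm_Pair_le)
  finally show ?thesis by simp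
qed

lemma cont_pj: "continuous_on K (\<lambda>p. pj1 (snd p))" "continuous_on K (\<lambda>p. pj2 (snd p))"
  "continuous_on K (\<lambda>p. pj3 (snd p))" "continuous_on K (\<lambda>p. pj4 (snd p))"
  "continuous_on K (\<lambda>p. pj5 (snd p))" "continuous_on K (\<lambda>p. pj6 (snd p))"
  unfolding pj1_def pj2_def pj3_def pj4_def pj5_def pj6_def by (intro continuous_intros)+




lemma at_pos_deriv:
  assumes "(f has_real_derivative D) (at t within {0..})" "t > 0"
  shows "(f has_real_derivative D) (at t)"
proof -
  have "(f has_real_derivative D) (at t within {0<..})"
    using assms(1) by (rule has_field_derivative_subset) auto
  moreover have "at t within {0<..} = at t" using assms(2) by (intro at_within_open) auto
  ultimately show ?thesis by simp
qed

locale refu = base +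
  fixes F :: "real \<Rightarrow> nat \<times> nat \<Rightarrow> real" and u0 u1 :: "nat \<times> nat \<Rightarrow> real"
    and u v :: "real \<Rightarrow> nat \<times> nat \<Rightarrow> real"
  assumes u0F: "in_F M N u0" and u1F: "in_F M N u1" and FF: "\<forall>t. in_F M N (F t)"
    and Fc: "\<forall>p. continuous_on {0..} (\<lambda>t. F t p)"
    and ref: "wave_sol h M N F (\<lambda>t j. 0) u0 u1 u v"
    and nondeg: "\<forall>t>0. \<forall>j\<in>{1..N-1}. (1/2) * u t (2,j) - 2 * u t (1,j) \<noteq> 0"
begin

lemma u_inF: "t \<ge> 0 \<Longrightarrow> in_F M N (u t)" using ref unfolding wave_sol_def by auto
lemma u_init: "u 0 = u0" "v 0 = u1" using ref unfolding wave_sol_def by auto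
lemma u_der: "t \<ge> 0 \<Longrightarrow> ((\<lambda>s. u s p) has_real_derivative v t p) (at t within {0..})"
  using ref unfolding wave_sol_def by blast
lemma v_der: "t \<ge> 0 \<Longrightarrow> p \<in> interior M N \<Longrightarrow>
    ((\<lambda>s. v s p) has_real_derivative F t p - Aop h (\<lambda>j. 0) (u t) p) (at t within {0..})"
  using ref unfolding wave_sol_def by blast

lemma u_off: "t \<ge> 0 \<Longrightarrow> p \<notin> interior M N \<Longrightarrow> u t p = 0"
  using u_inF unfolding in_F_def by blast

lemma v_off: assumes "t \<ge> 0" "p \<notin> interior M N" shows "v t p = 0"
proof (cases "t = 0")
  case True then show ?thesis using u_init u1F assms unfolding in_F_def by blast
next
  case False
  then have t: "t > 0" using assms by auto
  have d1: "((\<lambda>s. u s p) has_real_derivative v t p) (at t)" using u_der[of t p] t by (auto intro: at_pos_deriv)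
  have "((\<lambda>s. 0) has_real_derivative 0) (at t)" by simp
  then have d2: "((\<lambda>s. u s p) has_real_derivative 0) (at t)"
    by (rule has_field_derivative_transform_within_open[of _ _ _ "{0<..}"]) (use t u_off assms in auto)
  show ?thesis using DERIV_unique[OF d1 d2] .
qed

lemma u_cont: "continuous_on {0<..} (\<lambda>t. u t p)"
proof (intro continuous_at_imp_continuous_on ballI)
  fix t :: real assume "t \<in> {0<..}"
  then have "((\<lambda>s. u s p) has_real_derivative v t p) (at t)" using u_der[of t p] by (auto intro: at_pos_deriv)
  then show "isCont (\<lambda>t. u t p) t" by (rule DERIV_isCont)
qed

lemma v_cont: "continuous_on {0<..} (\<lambda>t. v t p)"
proof (cases "p \<in> interior M N")
  case True
  show ?thesis
  proof (intro continuous_at_imp_continuous_on ballI)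
    fix t :: real assume "t \<in> {0<..}"
    then have "((\<lambda>s. v s p) has_real_derivative F t p - Aop h (\<lambda>j. 0) (u t) p) (at t)"
      using v_der[of t p] True by (auto intro: at_pos_deriv)
    then show "isCont (\<lambda>t. v t p) t" by (rule DERIV_isCont)
  qed
next
  case False
  have "continuous_on {0<..} (\<lambda>t. 0::real)" by simp
  then show ?thesis by (rule continuous_on_cong[THEN iffD1, rotated 2]) (use v_off False in auto)
qed

definition Bx :: "nat \<Rightarrow> real \<Rightarrow> r6 \<Rightarrow> real" where
  "Bx j t x = 4*(u t (1,j) + pj1 x) - (u t (2,j) + pj2 x) + 3*pj3 x"
definition Rx :: "nat \<Rightarrow> real \<Rightarrow> r6 \<Rightarrow> real" where
  "Rx j t x = 2*(u t (1,j) + pj1 x) - (u t (2,j) + pj2 x) + pj3 x"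
definition Bdx :: "nat \<Rightarrow> real \<Rightarrow> r6 \<Rightarrow> real" where
  "Bdx j t x = 4*(v t (1,j) + pj4 x) - (v t (2,j) + pj5 x) + 3*pj6 x"
definition Rdx :: "nat \<Rightarrow> real \<Rightarrow> r6 \<Rightarrow> real" where
  "Rdx j t x = 2*(v t (1,j) + pj4 x) - (v t (2,j) + pj5 x) + pj6 x"
definition Hx :: "nat \<Rightarrow> real \<Rightarrow> r6 \<Rightarrow> real" where
  "Hx j t x = lamf (Bx j t x) (Rx j t x) (pj3 x)"
definition Gx :: "nat \<Rightarrow> real \<Rightarrow> r6 \<Rightarrow> real" where
  "Gx j t x = dlamf (Bx j t x) (Rx j t x) (pj3 x) (Bdx j t x) (Rdx j t x) (pj6 x)"

definition goodr :: "nat \<Rightarrow> real \<Rightarrow> bool" where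
  "goodr j r \<longleftrightarrow> (\<forall>t\<in>{T/2..T+1}. \<forall>x. norm x \<le> r \<longrightarrow>
     Bx j t x \<noteq> 0 \<and> Qf (Bx j t x) (Rx j t x) (pj3 x) > 0 \<and> \<bar>Hx j t x\<bar> < 1/4 \<and> \<bar>Gx j t x\<bar> < 1/2)"

lemma B0_nz: "t > 0 \<Longrightarrow> j \<in> {1..N-1} \<Longrightarrow> 4 * u t (1,j) - u t (2,j) \<noteq> 0"
  using nondeg by force

lemma small_j:
  assumes j: "j \<in> {1..N-1}"
  shows "\<exists>r>0. goodr j r"
proof -
  let ?S = "{T/2..T+1}"
  have S: "compact ?S" "?S \<subseteq> {0<..}" using Tpos by auto
  have cu: "continuous_on ?S (\<lambda>t. u t p)" for p using u_cont S(2) by (rule continuous_on_subset)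
  have cv: "continuous_on ?S (\<lambda>t. v t p)" for p using v_cont S(2) by (rule continuous_on_subset)
  have cuK: "continuous_on (?S \<times> C) (\<lambda>q. u (fst q) p)" for p C by (rule cont_fst[OF cu])
  have cvK: "continuous_on (?S \<times> C) (\<lambda>q. v (fst q) p)" for p C by (rule cont_fst[OF cv])
  have cB: "continuous_on (?S \<times> C) (\<lambda>q. Bx j (fst q) (snd q))" for C
    unfolding Bx_def by (intro continuous_intros cuK cont_pj)
  have cR: "continuous_on (?S \<times> C) (\<lambda>q. Rx j (fst q) (snd q))" for C
    unfolding Rx_def by (intro continuous_intros cuK cont_pj)
  have cBd: "continuous_on (?S \<times> C) (\<lambda>q. Bdx j (fst q) (snd q))" for C
    unfolding Bdx_def by (intro continuous_intros cvK cont_pj)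
  have cRd: "continuous_on (?S \<times> C) (\<lambda>q. Rdx j (fst q) (snd q))" for C
    unfolding Rdx_def by (intro continuous_intros cvK cont_pj)
  have c3: "continuous_on (?S \<times> C) (\<lambda>q. pj3 (snd q))" "continuous_on (?S \<times> C) (\<lambda>q. pj6 (snd q))" for C
    using cont_pj by auto
  define f1 where "f1 q = min \<bar>Bx j (fst q) (snd q)\<bar> (Qf (Bx j (fst q) (snd q)) (Rx j (fst q) (snd q)) (pj3 (snd q)))" for q
  have cf1: "continuous_on (?S \<times> cball 0 1) f1"
    unfolding f1_def Qf_def by (intro continuous_intros cB cR c3)
  have f10: "\<forall>t\<in>?S. f1 (t, 0) > 0"
  proof
    fix t assume t: "t \<in> ?S"
    then have "Bx j t 0 \<noteq> 0" using B0_nz[of t j] j Tpos unfolding Bx_def by auto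
    then show "f1 (t,0) > 0" unfolding f1_def Qf_def by simp
  qed
  obtain r1 where r1: "r1 > 0" "r1 \<le> 1" "\<forall>t\<in>?S. \<forall>x::r6. norm x \<le> r1 \<longrightarrow> f1 (t,x) > 0"
    using unif_pos[OF S(1) _ cf1 f10] by auto
  let ?K = "?S \<times> cball (0::r6) r1"
  have QK: "\<forall>q\<in>?K. Qf (Bx j (fst q) (snd q)) (Rx j (fst q) (snd q)) (pj3 (snd q)) > 0"
    using r1(3) unfolding f1_def by force
  define f2 where "f2 q = min (1/4 - \<bar>Hx j (fst q) (snd q)\<bar>) (1/2 - \<bar>Gx j (fst q) (snd q)\<bar>)" for q
  have cH: "continuous_on ?K (\<lambda>q. Hx j (fst q) (snd q))"
    unfolding Hx_def by (rule lamf_cont[OF cB cR c3(1) QK])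
  have cG: "continuous_on ?K (\<lambda>q. Gx j (fst q) (snd q))"
    unfolding Gx_def by (rule dlamf_cont[OF cB cR c3(1) cBd cRd c3(2) QK])
  have cf2: "continuous_on ?K f2" unfolding f2_def by (intro continuous_intros cH cG)
  have f20: "\<forall>t\<in>?S. f2 (t, 0) > 0" unfolding f2_def Hx_def Gx_def by (simp add: lamf_zero dlamf_zero)
  obtain r2 where r2: "r2 > 0" "r2 \<le> r1" "\<forall>t\<in>?S. \<forall>x::r6. norm x \<le> r2 \<longrightarrow> f2 (t,x) > 0"
    using unif_pos[OF S(1) r1(1) cf2 f20] by auto
  have "goodr j r2" unfolding goodr_def
  proof (intro ballI allI impI)
    fix t and x :: r6 assume t: "t \<in> ?S" and x: "norm x \<le> r2"
    have "norm x \<le> r1" using x r2(2) by linarith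
    then have "f1 (t,x) > 0" using r1(3) t by blast
    moreover have "f2 (t,x) > 0" using r2(3) t x by blast
    ultimately show "Bx j t x \<noteq> 0 \<and> Qf (Bx j t x) (Rx j t x) (pj3 x) > 0 \<and> \<bar>Hx j t x\<bar> < 1/4 \<and> \<bar>Gx j t x\<bar> < 1/2"
      unfolding f1_def f2_def by auto
  qed
  then show ?thesis using r2(1) by blast
qed

lemma small: "\<exists>r>0. \<forall>j\<in>{1..N-1}. goodr j r"
proof (rule finite_min_choice)
  show "finite {1..N-1}" "{1..N-1} \<noteq> {}" using N2 by auto
  show "\<forall>j\<in>{1..N-1}. \<exists>r>0. goodr j r" using small_j by blast
  show "goodr j r \<Longrightarrow> 0 < r' \<Longrightarrow> r' \<le> r \<Longrightarrow> goodr j r'" for j r r'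
    unfolding goodr_def by force
qed

end




locale ctl = tgt + refu +
  fixes r :: real
  assumes rgood: "\<forall>j\<in>{1..N-1}. goodr j r" and rsm: "6 * Bnd * mu \<le> r"
begin

definition X :: "nat \<Rightarrow> real \<Rightarrow> r6" where
  "X j t = (pw T (W 1 j) t, pw T (W 2 j) t, - pw T (W 0 j) t,
            pw T (pderiv (W 1 j)) t, pw T (pderiv (W 2 j)) t, - pw T (pderiv (W 0 j)) t)"

definition lam :: "real \<Rightarrow> nat \<Rightarrow> real" where
  "lam t j = (if t \<le> T/4 then 0 else Hx j t (X j t))"
definition dl :: "real \<Rightarrow> nat \<Rightarrow> real" where
  "dl t j = (if t \<le> T/4 then 0 else Gx j t (X j t))"

definition w :: "real \<Rightarrow> nat \<times> nat \<Rightarrow> real" where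
  "w t p = (if p \<in> interior M N then pw T (W (fst p) (snd p)) t else 0)"
definition wd :: "real \<Rightarrow> nat \<times> nat \<Rightarrow> real" where
  "wd t p = (if p \<in> interior M N then pw T (pderiv (W (fst p) (snd p))) t else 0)"
definition uu :: "real \<Rightarrow> nat \<times> nat \<Rightarrow> real" where
  "uu t p = u t p + w t p"
definition vv :: "real \<Rightarrow> nat \<times> nat \<Rightarrow> real" where
  "vv t p = v t p + wd t p"

lemma w_eq: "1 \<le> i \<Longrightarrow> w t (i,j) = pw T (W i j) t"
proof -
  assume i: "1 \<le> i"
  show ?thesis
  proof (cases "(i,j) \<in> interior M N")
    case True then show ?thesis unfolding w_def by simp
  next
    case False
    then have "i \<ge> M \<or> \<not> (1 \<le> j \<and> j \<le> N - 1)" using i unfolding interior_def by auto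
    then have "W i j = 0"
    proof
      assume "i \<ge> M" then show ?thesis unfolding W_def by simp
    next
      assume "\<not> (1 \<le> j \<and> j \<le> N - 1)" then show ?thesis by (rule W_bnd)
    qed
    then show ?thesis using False unfolding w_def by simp
  qed
qed

lemma X_out: "t \<notin> {T/2..T+1} \<Longrightarrow> X j t = 0"
  by (auto simp: X_def pw_def zero_prod_def)

lemma X_small: "norm (X j t) \<le> r"
proof -
  have "norm (X j t) \<le> \<bar>pw T (W 1 j) t\<bar> + \<bar>pw T (W 2 j) t\<bar> + \<bar>- pw T (W 0 j) t\<bar>
       + \<bar>pw T (pderiv (W 1 j)) t\<bar> + \<bar>pw T (pderiv (W 2 j)) t\<bar> + \<bar>- pw T (pderiv (W 0 j)) t\<bar>"
    unfolding X_def by (rule norm6)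
  also have "\<dots> \<le> 6 * (Bnd * mu)" using W_bounds[of 1 j t] W_bounds[of 2 j t] W_bounds[of 0 j t] by simp
  finally show ?thesis using rsm by simp
qed

lemma goodX: "j \<in> {1..N-1} \<Longrightarrow> t \<in> {T/2..T+1} \<Longrightarrow>
   Bx j t (X j t) \<noteq> 0 \<and> Qf (Bx j t (X j t)) (Rx j t (X j t)) (pj3 (X j t)) > 0
   \<and> \<bar>Hx j t (X j t)\<bar> < 1/4 \<and> \<bar>Gx j t (X j t)\<bar> < 1/2"
  using rgood X_small unfolding goodr_def by blast

lemma BQ:
  assumes t: "t > T/4" and j: "j \<in> {1..N-1}"
  shows "Bx j t (X j t) \<noteq> 0 \<and> Qf (Bx j t (X j t)) (Rx j t (X j t)) (pj3 (X j t)) > 0"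
proof (cases "t \<in> {T/2..T+1}")
  case True then show ?thesis using goodX j by blast
next
  case False
  then have X0: "X j t = 0" by (rule X_out)
  have "t > 0" using t Tpos by auto
  then have "Bx j t 0 \<noteq> 0" using B0_nz[of t j] j unfolding Bx_def by simp
  then show ?thesis unfolding X0 Qf_def by simp
qed

lemma lam_bnd: "j \<in> {1..N-1} \<Longrightarrow> \<bar>lam t j\<bar> \<le> 1/4 \<and> \<bar>dl t j\<bar> \<le> 1/2"
proof -
  assume j: "j \<in> {1..N-1}"
  show ?thesis
  proof (cases "t \<in> {T/2..T+1}")
    case True then show ?thesis using goodX[OF j True] unfolding lam_def dl_def by auto
  next
    case False
    then have X0: "X j t = 0" by (rule X_out)
    then show ?thesis unfolding lam_def dl_def Hx_def Gx_def by (simp add: lamf_zero dlamf_zero)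
  qed
qed

lemma lam_early: "t < T/2 \<Longrightarrow> lam t j = 0 \<and> dl t j = 0"
proof -
  assume t: "t < T/2"
  then have X0: "X j t = 0" by (intro X_out) auto
  show ?thesis unfolding lam_def dl_def Hx_def Gx_def X0 by (simp add: lamf_zero dlamf_zero)
qed

lemma gW: "good T 2 (W i j)" "good T 2 (pderiv (W i j))"
proof -
  show "good T 2 (W i j)" using good_W by (rule good_mono) simp
  have "good T 3 (pderiv (W i j))" using good_pderiv[of T 3 "W i j"] good_W by (simp add: numeral_eq_Suc)
  then show "good T 2 (pderiv (W i j))" by (rule good_mono) simp
qed

lemma pwd: "(pw T (W i j) has_real_derivative pw T (pderiv (W i j)) t) (at t)"
  "(pw T (pderiv (W i j)) has_real_derivative pw T (pderiv (pderiv (W i j))) t) (at t)"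
  using pw_deriv[OF Tpos gW(1)] pw_deriv[OF Tpos gW(2)] by auto

lemma pw_cont: "continuous_on A (pw T (W i j))" "continuous_on A (pw T (pderiv (W i j)))"
  using pwd by (auto intro!: continuous_at_imp_continuous_on DERIV_isCont)

lemma Lam_deriv:
  assumes t: "t > T/4" and j: "j \<in> {1..N-1}"
  shows "((\<lambda>s. Hx j s (X j s)) has_real_derivative Gx j t (X j t)) (at t)"
proof -
  have t0: "t > 0" using t Tpos by auto
  define bb where "bb s = 4*(u s (1,j) + pw T (W 1 j) s) - (u s (2,j) + pw T (W 2 j) s) + 3*(- pw T (W 0 j) s)" for s
  define rr where "rr s = 2*(u s (1,j) + pw T (W 1 j) s) - (u s (2,j) + pw T (W 2 j) s) + (- pw T (W 0 j) s)" for s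
  define ee where "ee s = - pw T (W 0 j) s" for s
  have eH: "(\<lambda>s. Hx j s (X j s)) = (\<lambda>s. lamf (bb s) (rr s) (ee s))"
    unfolding Hx_def Bx_def Rx_def X_def bb_def rr_def ee_def by simp
  have eG: "Gx j t (X j t) = dlamf (bb t) (rr t) (ee t) (Bdx j t (X j t)) (Rdx j t (X j t)) (- pw T (pderiv (W 0 j)) t)"
    unfolding Gx_def Bx_def Rx_def X_def bb_def rr_def ee_def by simp
  have du: "((\<lambda>s. u s p) has_real_derivative v t p) (at t)" for p
    using u_der[of t p] t0 by (auto intro: at_pos_deriv)
  have db: "(bb has_real_derivative Bdx j t (X j t)) (at t)"
    unfolding bb_def[abs_def] Bdx_def X_def
    by (auto intro!: derivative_eq_intros du pwd)
  have dr: "(rr has_real_derivative Rdx j t (X j t)) (at t)"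
    unfolding rr_def[abs_def] Rdx_def X_def
    by (auto intro!: derivative_eq_intros du pwd)
  have de: "(ee has_real_derivative - pw T (pderiv (W 0 j)) t) (at t)"
    unfolding ee_def[abs_def] by (auto intro!: derivative_eq_intros pwd)
  have Q: "Qf (bb t) (rr t) (ee t) > 0" using BQ[OF t j]
    unfolding Bx_def Rx_def X_def bb_def rr_def ee_def by simp
  show ?thesis unfolding eH eG by (rule lamf_deriv[OF db dr de refl Q])
qed

lemma lam_deriv:
  assumes j: "j \<in> {1..N-1}"
  shows "((\<lambda>s. lam s j) has_real_derivative dl t j) (at t)"
proof (cases "t < T/2")
  case True
  have "((\<lambda>s. 0) has_real_derivative 0) (at t)" by simp
  then have "((\<lambda>s. lam s j) has_real_derivative 0) (at t)"
    by (rule has_field_derivative_transform_within_open[of _ _ _ "{..<T/2}"]) (use lam_early True in auto)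
  then show ?thesis using lam_early[OF True] by simp
next
  case False
  then have t: "t > T/4" using Tpos by auto
  have "((\<lambda>s. lam s j) has_real_derivative Gx j t (X j t)) (at t)"
    by (rule has_field_derivative_transform_within_open[OF Lam_deriv[OF t j], of "{T/4<..}"])
       (use t in \<open>auto simp: lam_def\<close>)
  then show ?thesis using t unfolding dl_def by simp
qed

lemma dl_cont:
  assumes j: "j \<in> {1..N-1}"
  shows "continuous_on {0..} (\<lambda>t. dl t j)"
proof -
  have c1: "continuous_on {..<T/2} (\<lambda>t. dl t j)"
  proof -
    have "continuous_on {..<T/2} (\<lambda>t. 0::real)" by simp
    then show ?thesis by (rule continuous_on_cong[THEN iffD1, rotated 2]) (use lam_early in auto)
  qed
  have cu: "continuous_on {T/4<..} (\<lambda>t. u t p)" for p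
    using u_cont by (rule continuous_on_subset) (use Tpos in auto)
  have cv: "continuous_on {T/4<..} (\<lambda>t. v t p)" for p
    using v_cont by (rule continuous_on_subset) (use Tpos in auto)
  have c2: "continuous_on {T/4<..} (\<lambda>t. Gx j t (X j t))"
    unfolding Gx_def
  proof (rule dlamf_cont)
    show "continuous_on {T/4<..} (\<lambda>p. Bx j p (X j p))" unfolding Bx_def X_def
      by (simp, intro continuous_intros cu pw_cont)
    show "continuous_on {T/4<..} (\<lambda>p. Rx j p (X j p))" unfolding Rx_def X_def
      by (simp, intro continuous_intros cu pw_cont)
    show "continuous_on {T/4<..} (\<lambda>p. pj3 (X j p))" unfolding X_def
      by (simp, intro continuous_intros pw_cont)
    show "continuous_on {T/4<..} (\<lambda>p. Bdx j p (X j p))" unfolding Bdx_def X_def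
      by (simp, intro continuous_intros cv pw_cont)
    show "continuous_on {T/4<..} (\<lambda>p. Rdx j p (X j p))" unfolding Rdx_def X_def
      by (simp, intro continuous_intros cv pw_cont)
    show "continuous_on {T/4<..} (\<lambda>p. pj6 (X j p))" unfolding X_def
      by (simp, intro continuous_intros pw_cont)
    show "\<forall>p\<in>{T/4<..}. 0 < Qf (Bx j p (X j p)) (Rx j p (X j p)) (pj3 (X j p))"
      using BQ j by auto
  qed
  have c2': "continuous_on {T/4<..} (\<lambda>t. dl t j)"
    using c2 by (rule continuous_on_cong[THEN iffD1, rotated 2]) (auto simp: dl_def)
  have "continuous_on ({..<T/2} \<union> {T/4<..}) (\<lambda>t. dl t j)"
    by (rule continuous_on_open_Un[OF _ _ c1 c2']) auto
  then show ?thesis by (rule continuous_on_subset) (use Tpos in auto)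
qed

lemma admissible_lam: "admissible N lam"
  unfolding admissible_def
proof (intro exI[of _ dl] conjI)
  show "\<forall>j\<in>{1..N-1}. \<forall>t\<ge>0. ((\<lambda>s. lam s j) has_real_derivative dl t j) (at t within {0..})"
    using lam_deriv by (auto intro: has_field_derivative_at_within)
  show "\<forall>j\<in>{1..N-1}. continuous_on {0..} (\<lambda>t. dl t j)" using dl_cont by auto
  show "\<exists>c<1/2. \<forall>j\<in>{1..N-1}. \<forall>t\<ge>0. \<bar>lam t j\<bar> \<le> c"
    using lam_bnd by (intro exI[of _ "1/4"]) auto
  show "\<forall>j\<in>{1..N-1}. \<exists>c<1. \<forall>t\<ge>0. \<bar>dl t j\<bar> \<le> c"
    using lam_bnd by (intro ballI exI[of _ "1/2"]) auto
qed

end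




lemma row1_alg:
  fixes h L U1 U2 E a a1 a2 wc wd p1 p2 pc pd :: real
  assumes h: "h \<noteq> 0" and L: "\<bar>L\<bar> < 1/2"
    and id: "2*U1/(1+L) - 2*U2/(2+L) = 2*U1 - U2 + E"
    and Ee: "-E = h^2*a + 4*a1 - a2 - wc - wd"
    and U: "U1 = p1 + a1" "U2 = p2 + a2"
  shows "a = (2*(1+1/(1+0))*p1 - (2/(2+0))*p2 - pc - pd)/h^2
           - (2*(1+1/(1+L))*U1 - (2/(2+L))*U2 - (pc + wc) - (pd + wd))/h^2"
proof -
  have L1: "1 + L \<noteq> 0" using L by auto
  have "2*(1+1/(1+L))*U1 - (2/(2+L))*U2 = 2*U1 + (2*U1/(1+L) - 2*U2/(2+L))"
    using L1 by (simp add: field_simps)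
  also have "\<dots> = 4*U1 - U2 + E" unfolding id by simp
  finally have e: "2*(1+1/(1+L))*U1 - (2/(2+L))*U2 = 4*U1 - U2 + E" .
  have "(2*(1+1/(1+0))*p1 - (2/(2+0))*p2 - pc - pd)/h^2
           - (2*(1+1/(1+L))*U1 - (2/(2+L))*U2 - (pc + wc) - (pd + wd))/h^2
        = ((4*p1 - p2 - pc - pd) - (4*U1 - U2 + E - (pc + wc) - (pd + wd)))/h^2"
    unfolding e using h by (simp add: field_simps)
  also have "\<dots> = (h^2 * a)/h^2" using Ee U by (simp add: algebra_simps)
  also have "\<dots> = a" using h by simp
  finally show ?thesis by simp
qed

context ctl
begin

lemma w_early: "t < T/2 \<Longrightarrow> w t p = 0 \<and> wd t p = 0"
  unfolding w_def wd_def pw_def by auto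

lemma uu_inF: "t \<ge> 0 \<Longrightarrow> in_F M N (uu t)"
  using u_inF unfolding in_F_def uu_def w_def by auto

lemma uu_init: "uu 0 = u0" "vv 0 = u1"
  using w_early[of 0] u_init Tpos unfolding uu_def vv_def by (auto simp: fun_eq_iff)

lemma uu_der: "t \<ge> 0 \<Longrightarrow> ((\<lambda>s. uu s p) has_real_derivative vv t p) (at t within {0..})"
proof -
  assume t: "t \<ge> 0"
  have dw: "((\<lambda>s. w s p) has_real_derivative wd t p) (at t within {0..})"
  proof (cases "p \<in> interior M N")
    case True
    then show ?thesis unfolding w_def wd_def using pwd(1)[of "fst p" "snd p" t]
      by (auto intro: has_field_derivative_at_within)
  next
    case False then show ?thesis unfolding w_def wd_def by simp
  qed
  show ?thesis unfolding uu_def vv_def using DERIV_add[OF u_der[OF t] dw] .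
qed

lemma key_alg:
  assumes t: "t \<ge> 0" and p: "(i,j) \<in> interior M N"
  shows "pw T (pderiv (pderiv (W i j))) t = Aop h (\<lambda>j. 0) (u t) (i,j) - Aop h (lam t) (uu t) (i,j)"
proof -
  have ij: "1 \<le> i" "i \<le> M - 1" "1 \<le> j" "j \<le> N - 1" using p unfolding interior_def by auto
  have h0: "h \<noteq> 0" using hpos by auto
  have rec: "pw T (W (i-1) j) t = h^2 * pw T (pderiv (pderiv (W i j))) t + 4 * pw T (W i j) t
      - pw T (W (i+1) j) t - pw T (W i (j+1)) t - pw T (W i (j-1)) t"
    unfolding W_rec[OF ij] by (simp add: pw_add pw_diff pw_smult)
  show ?thesis
  proof (cases "i = 1")
    case False
    then have i2: "i - 1 \<ge> 1" using ij by auto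
    have ws: "w t (i,j) = pw T (W i j) t" "w t (i+1,j) = pw T (W (i+1) j) t"
      "w t (i-1,j) = pw T (W (i-1) j) t" "w t (i,j+1) = pw T (W i (j+1)) t"
      "w t (i,j-1) = pw T (W i (j-1)) t" using w_eq ij i2 by auto
    have A: "Aop h L f (i,j) = (4 * f (i,j) - f (i+1,j) - f (i-1,j) - f (i,j+1) - f (i,j-1)) / h\<^sup>2" for L f
      unfolding Aop_def using False by simp
    show ?thesis unfolding A uu_def ws rec using h0
      by (simp add: field_simps)
  next
    case True
    show ?thesis
    proof (cases "t \<le> T/4")
      case True2: True
      have l0: "lam t = (\<lambda>j. 0)" using True2 unfolding lam_def by (auto simp: fun_eq_iff)
      have tt: "t < T/2" using True2 Tpos by auto
      have u0: "uu t = u t" using w_early[OF tt] unfolding uu_def by (auto simp: fun_eq_iff)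
      have "pw T (pderiv (pderiv (W i j))) t = 0" using tt unfolding pw_def by auto
      then show ?thesis unfolding l0 u0 by simp
    next
      case False
      have jj: "j \<in> {1..N-1}" using ij by auto
      define L where "L = lam t j"
      have LH: "L = Hx j t (X j t)" unfolding L_def lam_def using False by simp
      have bq: "Bx j t (X j t) \<noteq> 0" "Qf (Bx j t (X j t)) (Rx j t (X j t)) (pj3 (X j t)) > 0"
        using BQ[of t j] False jj by auto
      have quad: "Rx j t (X j t) * L^2 + Bx j t (X j t) * L + 2 * pj3 (X j t) = 0"
        unfolding LH Hx_def by (rule lamf_quad) (use bq in auto)
      define U1 where "U1 = u t (1,j) + pw T (W 1 j) t"
      define U2 where "U2 = u t (2,j) + pw T (W 2 j) t"
      define E where "E = - pw T (W 0 j) t"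
      have quad': "(2*U1 - U2 + E) * L^2 + (4*U1 - U2 + 3*E) * L + 2*E = 0"
        using quad unfolding Rx_def Bx_def X_def U1_def U2_def E_def by simp
      have Lb: "\<bar>L\<bar> < 1/2" using lam_bnd[OF jj, of t] unfolding L_def by auto
      have id: "2*U1/(1+L) - 2*U2/(2+L) = 2*U1 - U2 + E" by (rule row1_identity[OF quad' Lb])
      have Ee: "-E = h^2 * pw T (pderiv (pderiv (W 1 j))) t + 4 * pw T (W 1 j) t - pw T (W 2 j) t
          - pw T (W 1 (j+1)) t - pw T (W 1 (j-1)) t"
        using rec True unfolding E_def by (simp add: numeral_2_eq_2)
      have ws: "uu t (1,j) = U1" "uu t (2,j) = U2" "uu t (1,j+1) = u t (1,j+1) + pw T (W 1 (j+1)) t"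
        "uu t (1,j-1) = u t (1,j-1) + pw T (W 1 (j-1)) t"
        unfolding uu_def U1_def U2_def using w_eq by auto
      have A1: "Aop h LL f (1,j) = (2*(1+1/(1+LL j))*f(1,j) - (2/(2+LL j))*f(2,j) - f(1,j+1) - f(1,j-1))/h\<^sup>2" for LL f
        unfolding Aop_def by simp
      show ?thesis unfolding True A1 ws L_def[symmetric]
        using row1_alg[OF h0 Lb id Ee U1_def U2_def, of "u t (1,j+1)" "u t (1,j-1)"]
        by simp
    qed
  qed
qed

lemma vv_der: "t \<ge> 0 \<Longrightarrow> p \<in> interior M N \<Longrightarrow>
    ((\<lambda>s. vv s p) has_real_derivative F t p - Aop h (lam t) (uu t) p) (at t within {0..})"
proof -
  assume t: "t \<ge> 0" and p: "p \<in> interior M N"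
  obtain i j where pij: "p = (i,j)" by (cases p)
  have dw: "((\<lambda>s. wd s p) has_real_derivative pw T (pderiv (pderiv (W i j))) t) (at t within {0..})"
    unfolding wd_def using p pwd(2)[of i j t] unfolding pij by (auto intro: has_field_derivative_at_within)
  have "((\<lambda>s. vv s p) has_real_derivative (F t p - Aop h (\<lambda>j. 0) (u t) p) + pw T (pderiv (pderiv (W i j))) t)
      (at t within {0..})"
    unfolding vv_def using DERIV_add[OF v_der[OF t p] dw] .
  then show ?thesis using key_alg[OF t p[unfolded pij]] unfolding pij by simp
qed

lemma wave: "wave_sol h M N F lam u0 u1 uu vv"
  unfolding wave_sol_def using uu_inF uu_init uu_der vv_der by auto

lemma final_vals:
  "uu T p = u T p + (if p \<in> interior M N then d0 p else 0)"
  "vv T p = v T p + (if p \<in> interior M N then d1 p else 0)"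
proof -
  obtain i j where pij: "p = (i,j)" by (cases p)
  have "w T p = (if p \<in> interior M N then d0 p else 0) \<and> wd T p = (if p \<in> interior M N then d1 p else 0)"
  proof (cases "p \<in> interior M N")
    case True
    then have ij: "1 \<le> i" "i \<le> M - 1" using pij unfolding interior_def by auto
    show ?thesis using True coeff_W01[OF ij, of j] pw_T[OF Tpos] unfolding w_def wd_def pij
      by (simp add: coeff_pderiv)
  next
    case False then show ?thesis unfolding w_def wd_def by simp
  qed
  then show "uu T p = u T p + (if p \<in> interior M N then d0 p else 0)"
    "vv T p = v T p + (if p \<in> interior M N then d1 p else 0)" unfolding uu_def vv_def by auto
qed

end




theorem theorem2p31:
  fixes h T :: real and M N :: nat
    and F :: "real \<Rightarrow> nat \<times> nat \<Rightarrow> real"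
    and u0 u1 :: "nat \<times> nat \<Rightarrow> real"
    and u v :: "real \<Rightarrow> nat \<times> nat \<Rightarrow> real"
  assumes "h > 0" and "M \<ge> 2" and "N \<ge> 2" and "T > 0"
    and "in_F M N u0" and "in_F M N u1"
    and "\<forall>t. in_F M N (F t)"
    and "\<forall>p. continuous_on {0..} (\<lambda>t. F t p)"
    and ref: "wave_sol h M N F (\<lambda>t j. 0) u0 u1 u v"
    and nondeg: "\<forall>t>0. \<forall>j\<in>{1..N-1}. (1/2) * u t (2,j) - 2 * u t (1,j) \<noteq> 0"
  shows "\<exists>\<delta>>0. \<exists>\<epsilon>>0. \<forall>z0 z1.
           in_F M N z0 \<and> in_F M N z1 \<and>
           (\<forall>p\<in>interior M N. \<bar>z0 p - u T p\<bar> < \<epsilon> \<and> \<bar>z1 p - v T p\<bar> < \<epsilon>)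
           \<longrightarrow> (\<exists>lam. admissible N lam
                  \<and> (\<forall>t\<in>{0..T}. \<forall>j\<in>{1..N-1}. \<bar>h * lam t j\<bar> < \<delta>)
                  \<and> (\<exists>u' v'. wave_sol h M N F lam u0 u1 u' v' \<and> u' T = z0 \<and> v' T = z1))"
proof -
  interpret R: refu h T M N F u0 u1 u v
    by unfold_locales (use assms in auto)
  obtain r where r: "r > 0" "\<forall>j\<in>{1..N-1}. R.goodr j r" using R.small by blast
  define c where "c = real (card (interior M N)) + 1"
  have cpos: "c > 0" unfolding c_def by auto
  define \<epsilon> where "\<epsilon> = r / (12 * (R.Bnd + 1) * c)"
  have Bn: "0 \<le> R.Bnd" by (rule R.Bnd_nonneg)
  have epos: "\<epsilon> > 0" unfolding \<epsilon>_def using r(1) Bn cpos by auto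
  have main: "\<forall>z0 z1.
           in_F M N z0 \<and> in_F M N z1 \<and>
           (\<forall>p\<in>interior M N. \<bar>z0 p - u T p\<bar> < \<epsilon> \<and> \<bar>z1 p - v T p\<bar> < \<epsilon>)
           \<longrightarrow> (\<exists>lam. admissible N lam
                  \<and> (\<forall>t\<in>{0..T}. \<forall>j\<in>{1..N-1}. \<bar>h * lam t j\<bar> < h)
                  \<and> (\<exists>u' v'. wave_sol h M N F lam u0 u1 u' v' \<and> u' T = z0 \<and> v' T = z1))"
  proof (intro allI impI)
    fix z0 z1
    assume H: "in_F M N z0 \<and> in_F M N z1 \<and>
           (\<forall>p\<in>interior M N. \<bar>z0 p - u T p\<bar> < \<epsilon> \<and> \<bar>z1 p - v T p\<bar> < \<epsilon>)"
    define d0 where "d0 p = z0 p - u T p" for p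
    define d1 where "d1 p = z1 p - v T p" for p
    interpret D: tgt h T M N d0 d1 by unfold_locales
    have "D.mu \<le> (\<Sum>p\<in>interior M N. 2 * \<epsilon>)"
      unfolding D.mu_def using H unfolding d0_def d1_def
      by (intro sum_mono) (smt (verit))
    also have "\<dots> = real (card (interior M N)) * (2 * \<epsilon>)" by simp
    also have "\<dots> \<le> c * (2 * \<epsilon>)" unfolding c_def using epos by auto
    finally have mu: "D.mu \<le> c * (2 * \<epsilon>)" .
    have "6 * R.Bnd * D.mu \<le> 6 * R.Bnd * (c * (2 * \<epsilon>))"
      using mu Bn by (intro mult_left_mono) auto
    also have "\<dots> = R.Bnd * (12 * c * \<epsilon>)" by (simp add: algebra_simps)
    also have "\<dots> \<le> (R.Bnd + 1) * (12 * c * \<epsilon>)"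
      using cpos epos by (intro mult_right_mono) auto
    also have "\<dots> = r"
    proof -
      have nz: "12 * (R.Bnd + 1) * c \<noteq> 0" using cpos Bn by auto
      show ?thesis unfolding \<epsilon>_def using nz by (simp add: field_simps)
    qed
    finally have sm: "6 * R.Bnd * D.mu \<le> r" .
    interpret C: ctl h T M N d0 d1 F u0 u1 u v r
      by unfold_locales (use r sm in auto)
    have bnd: "\<forall>t\<in>{0..T}. \<forall>j\<in>{1..N-1}. \<bar>h * C.lam t j\<bar> < h"
    proof (intro ballI)
      fix t j assume "t \<in> {0..T}" "j \<in> {1..N-1}"
      then have "\<bar>C.lam t j\<bar> \<le> 1/4" using C.lam_bnd by auto
      then show "\<bar>h * C.lam t j\<bar> < h" using assms(1) by (simp add: abs_mult)
    qed
    have uT: "C.uu T = z0"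
    proof
      fix p
      have z: "p \<notin> interior M N \<Longrightarrow> z0 p = 0" using H unfolding in_F_def by blast
      show "C.uu T p = z0 p"
        using C.final_vals(1)[of p] R.u_off[of T p] z assms(4) unfolding d0_def by (cases "p \<in> interior M N") auto
    qed
    have vT: "C.vv T = z1"
    proof
      fix p
      have z: "p \<notin> interior M N \<Longrightarrow> z1 p = 0" using H unfolding in_F_def by blast
      show "C.vv T p = z1 p"
        using C.final_vals(2)[of p] R.v_off[of T p] z assms(4) unfolding d1_def by (cases "p \<in> interior M N") auto
    qed
    have "wave_sol h M N F C.lam u0 u1 C.uu C.vv \<and> C.uu T = z0 \<and> C.vv T = z1"
      using C.wave uT vT by auto
    then have "\<exists>u' v'. wave_sol h M N F C.lam u0 u1 u' v' \<and> u' T = z0 \<and> v' T = z1" by blast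
    then show "\<exists>lam. admissible N lam
                  \<and> (\<forall>t\<in>{0..T}. \<forall>j\<in>{1..N-1}. \<bar>h * lam t j\<bar> < h)
                  \<and> (\<exists>u' v'. wave_sol h M N F lam u0 u1 u' v' \<and> u' T = z0 \<and> v' T = z1)"
      using C.admissible_lam bnd by blast
  qed
  show ?thesis using main epos assms(1) by blast
qed


end
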